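(* Let $q$ be a nonzero complex number with $q^4\neq1$, let $\zeta,\zeta',\zeta''$ be nonzero complex numbers different from $\pm1$, and let $a,b,c,d,e,f\in\mathbb{C}$ satisfy $ade=bcf$. For $\alpha,\beta\in\mathbb{C}$ put $R(\sigma,\tau,\alpha,\beta):=\alpha R_{\sigma,\tau}+\beta R'_{\sigma,\tau}$. Then, as maps $V(\zeta)\otimes V(\zeta')\otimes V(\zeta'')\to V(\zeta'')\otimes V(\zeta')\otimes V(\zeta)$, \[\bigl(R(\zeta',\zeta'',a,b)\otimes I_{V(\zeta)}\bigr)\bigl(I_{V(\zeta')}\otimes R(\zeta,\zeta'',c,d)\bigr)\bigl(R(\zeta,\zeta',e,f)\otimes I_{V(\zeta'')}\bigr)\] \[=\bigl(I_{V(\zeta'')}\otimes R(\zeta,\zeta',e,f)\bigr)\bigl(R(\zeta,\zeta'',c,d)\otimes I_{V(\zeta')}\bigr)\bigl(I_{V(\zeta)}\otimes R(\zeta',\zeta'',a,b)\bigr).\]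
   Context: $V(\zeta)$ is the two-dimensional super vector space with basis $x$ (even), $y$ (odd), which carries the structure of the Kac module of $U_q(\mathfrak{gl}(1|1))$ (or $U_q(\mathfrak{sl}(1|1))$) with central element $W$ acting by $\zeta$; both sides above are module homomorphisms. For nonzero $\sigma,\tau$, with $x,y$ the basis of $V(\sigma)$ and $\tilde x,\tilde y$ that of $V(\tau)$, the even linear maps $R_{\sigma,\tau},R'_{\sigma,\tau}:V(\sigma)\otimes V(\tau)\to V(\tau)\otimes V(\sigma)$ are \[R_{\sigma,\tau}:\ x\otimes\tilde x\mapsto \tilde x\otimes x,\ x\otimes\tilde y\mapsto \sigma\,\tilde y\otimes x,\ y\otimes\tilde x\mapsto \tau\,\tilde x\otimes y+(1-\sigma^2)\,\tilde y\otimes x,\ y\otimes\tilde y\mapsto-\sigma\tau\,\tilde y\otimes y,\] \[R'_{\sigma,\tau}:\ x\otimes\tilde x\mapsto -\sigma\tau\,\tilde x\otimes x,\ x\otimes\tilde y\mapsto (1-\tau^2)\,\tilde x\otimes y-\tau\,\tilde y\otimes x,\ y\otimes\tilde x\mapsto-\sigma\,\tilde x\otimes y,\ y\otimes\tilde y\mapsto\tilde y\otimes y.\] $I_X$ denotes the identity of $X$. *)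

theory Defs
  imports Complex_Main
begin

text \<open>Basis of V(zeta): False = x (even), True = y (odd).
  A vector of V(s1) (x) V(s2) (x) V(s3) is its coefficient function on the basis
  tensors (b1,b2,b3).  An even linear map V(s) (x) V(t) -> V(t) (x) V(s) is given by
  its matrix M (i,j) (k,l) = coefficient of basis tensor (k,l) in the image of (i,j).\<close>

definition Rmat :: "complex \<Rightarrow> complex \<Rightarrow> bool \<times> bool \<Rightarrow> bool \<times> bool \<Rightarrow> complex" where
  "Rmat s t ij kl =
    (if ij = (False, False) \<and> kl = (False, False) then 1
     else if ij = (False, True) \<and> kl = (True, False) then s
     else if ij = (True, False) \<and> kl = (False, True) then t
     else if ij = (True, False) \<and> kl = (True, False) then 1 - s\<^sup>2
     else if ij = (True, True) \<and> kl = (True, True) then - s * t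
     else 0)"

definition Rmat' :: "complex \<Rightarrow> complex \<Rightarrow> bool \<times> bool \<Rightarrow> bool \<times> bool \<Rightarrow> complex" where
  "Rmat' s t ij kl =
    (if ij = (False, False) \<and> kl = (False, False) then - s * t
     else if ij = (False, True) \<and> kl = (False, True) then 1 - t\<^sup>2
     else if ij = (False, True) \<and> kl = (True, False) then - t
     else if ij = (True, False) \<and> kl = (False, True) then - s
     else if ij = (True, True) \<and> kl = (True, True) then 1
     else 0)"

definition Rcomb :: "complex \<Rightarrow> complex \<Rightarrow> complex \<Rightarrow> complex \<Rightarrow> bool \<times> bool \<Rightarrow> bool \<times> bool \<Rightarrow> complex" where
  "Rcomb s t \<alpha> \<beta> ij kl = \<alpha> * Rmat s t ij kl + \<beta> * Rmat' s t ij kl"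

text \<open>M (x) I acting on a triple tensor (M even, so no Koszul signs).\<close>
definition tensor_left :: "(bool \<times> bool \<Rightarrow> bool \<times> bool \<Rightarrow> complex) \<Rightarrow> (bool \<times> bool \<times> bool \<Rightarrow> complex) \<Rightarrow> (bool \<times> bool \<times> bool \<Rightarrow> complex)" where
  "tensor_left M u = (\<lambda>(k, l, m). \<Sum>i\<in>UNIV. \<Sum>j\<in>UNIV. M (i, j) (k, l) * u (i, j, m))"

text \<open>I (x) M acting on a triple tensor (M even, so no Koszul signs).\<close>
definition tensor_right :: "(bool \<times> bool \<Rightarrow> bool \<times> bool \<Rightarrow> complex) \<Rightarrow> (bool \<times> bool \<times> bool \<Rightarrow> complex) \<Rightarrow> (bool \<times> bool \<times> bool \<Rightarrow> complex)" where
  "tensor_right M u = (\<lambda>(k, l, m). \<Sum>j\<in>UNIV. \<Sum>n\<in>UNIV. M (j, n) (l, m) * u (k, j, n))"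

end

theory Submission
  imports Defs
begin

lemma RC: "Rcomb s t \<alpha> \<beta> (False,False) (False,False) = \<alpha> - \<beta>*s*t"
 "Rcomb s t \<alpha> \<beta> (False,True) (False,True) = \<beta>*(1-t^2)"
 "Rcomb s t \<alpha> \<beta> (False,True) (True,False) = \<alpha>*s - \<beta>*t"
 "Rcomb s t \<alpha> \<beta> (True,False) (False,True) = \<alpha>*t - \<beta>*s"
 "Rcomb s t \<alpha> \<beta> (True,False) (True,False) = \<alpha>*(1-s^2)"
 "Rcomb s t \<alpha> \<beta> (True,True) (True,True) = \<beta> - \<alpha>*s*t"
 "Rcomb s t \<alpha> \<beta> (False,False) (False,True) = 0"
 "Rcomb s t \<alpha> \<beta> (False,False) (True,False) = 0"
 "Rcomb s t \<alpha> \<beta> (False,False) (True,True) = 0"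
 "Rcomb s t \<alpha> \<beta> (False,True) (False,False) = 0"
 "Rcomb s t \<alpha> \<beta> (False,True) (True,True) = 0"
 "Rcomb s t \<alpha> \<beta> (True,False) (False,False) = 0"
 "Rcomb s t \<alpha> \<beta> (True,False) (True,True) = 0"
 "Rcomb s t \<alpha> \<beta> (True,True) (False,False) = 0"
 "Rcomb s t \<alpha> \<beta> (True,True) (False,True) = 0"
 "Rcomb s t \<alpha> \<beta> (True,True) (True,False) = 0"
  by (simp_all add: Rcomb_def Rmat_def Rmat'_def algebra_simps)

theorem theorem6p2:
  fixes q \<zeta> \<zeta>' \<zeta>'' a b c d e f :: complex
  assumes "q \<noteq> 0" and "q ^ 4 \<noteq> 1"
    and "\<zeta> \<noteq> 0" and "\<zeta> \<noteq> 1" and "\<zeta> \<noteq> -1"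
    and "\<zeta>' \<noteq> 0" and "\<zeta>' \<noteq> 1" and "\<zeta>' \<noteq> -1"
    and "\<zeta>'' \<noteq> 0" and "\<zeta>'' \<noteq> 1" and "\<zeta>'' \<noteq> -1"
    and "a * d * e = b * c * f"
  shows "tensor_left (Rcomb \<zeta>' \<zeta>'' a b) \<circ> tensor_right (Rcomb \<zeta> \<zeta>'' c d) \<circ> tensor_left (Rcomb \<zeta> \<zeta>' e f)
       = tensor_right (Rcomb \<zeta> \<zeta>' e f) \<circ> tensor_left (Rcomb \<zeta> \<zeta>'' c d) \<circ> tensor_right (Rcomb \<zeta>' \<zeta>'' a b)"
proof (intro ext)
  fix u :: "bool \<times> bool \<times> bool \<Rightarrow> complex" and x :: "bool \<times> bool \<times> bool"
  obtain k l m where x: "x = (k, l, m)" by (cases x) auto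
  have h: "a * d * e = b * c * f" by fact
  show "(tensor_left (Rcomb \<zeta>' \<zeta>'' a b) \<circ> tensor_right (Rcomb \<zeta> \<zeta>'' c d) \<circ> tensor_left (Rcomb \<zeta> \<zeta>' e f)) u x = (tensor_right (Rcomb \<zeta> \<zeta>' e f) \<circ> tensor_left (Rcomb \<zeta> \<zeta>'' c d) \<circ> tensor_right (Rcomb \<zeta>' \<zeta>'' a b)) u x"
    unfolding x
    apply (cases k; cases l; cases m)
    apply (simp_all add: tensor_left_def tensor_right_def RC UNIV_bool)
    using h apply algebra+
    done
qed

end
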